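(* Let $M_1,\dots,M_N$ be matrices in $\mathbb C^{d\times nd}$. Let $\lambda_1,\dots,\lambda_{nd}$ be the eigenvalues of $\sum_{j}M_j^\ast M_j$ and $\nu_1,\dots,\nu_d$ the eigenvalues of $\sum_j M_jM_j^\ast$. Then $\sum_{i=1}^{nd}\lambda_i=\sum_{j=1}^d\nu_j$. Furthermore, if $\max_i\lambda_i\le\frac1d\sum_{j=1}^d\nu_j$, then for every integer $p\ge2$, \[ \Big\|\Big(\sum_j M_jM_j^\ast\Big)^{1/2}\Big\|_{S_{2p}}^{2p}\ge\Big\|\Big(\sum_j M_j^\ast M_j\Big)^{1/2}\Big\|_{S_{2p}}^{2p}. \]
   Context: $A^\ast$ is the conjugate transpose. For a matrix $A$, the Schatten $p$-norm is $\|A\|_{S_p}=\big(\mathrm{tr}\,(A^\ast A)^{p/2}\big)^{1/p}$. *)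

theory Defs
  imports "Jordan_Normal_Form.Schur_Decomposition" "Jordan_Normal_Form.Jordan_Normal_Form"
begin

definition mat_sum :: "nat \<Rightarrow> (nat \<Rightarrow> 'a::comm_monoid_add mat) \<Rightarrow> nat \<Rightarrow> 'a mat" where
  "mat_sum k f N = foldr (\<lambda>j acc. f j + acc) [0..<N] (0\<^sub>m k k)"

definition mtrace :: "'a::comm_monoid_add mat \<Rightarrow> 'a" where
  "mtrace A = (\<Sum>i<dim_row A. A $$ (i,i))"

(* eigenvalues with algebraic multiplicity *)
definition eigvals :: "complex mat \<Rightarrow> complex multiset" where
  "eigvals A = proots (char_poly A)"

definition real_diag :: "nat \<Rightarrow> (nat \<Rightarrow> real) \<Rightarrow> complex mat" where
  "real_diag n r = mat n n (\<lambda>(i,j). if i = j then complex_of_real (r i) else 0)"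

definition unitary :: "nat \<Rightarrow> complex mat \<Rightarrow> bool" where
  "unitary n U \<longleftrightarrow> U \<in> carrier_mat n n \<and> U * mat_adjoint U = 1\<^sub>m n \<and> mat_adjoint U * U = 1\<^sub>m n"

(* H^s for a positive semidefinite matrix H = U diag(r) U^*, defined by functional calculus *)
definition psd_pow :: "real \<Rightarrow> complex mat \<Rightarrow> complex mat" where
  "psd_pow s H = (SOME R. \<exists>n U r. H \<in> carrier_mat n n \<and> unitary n U \<and> (\<forall>i<n. r i \<ge> 0) \<and>
       H = U * real_diag n r * mat_adjoint U \<and>
       R = U * real_diag n (\<lambda>i. r i powr s) * mat_adjoint U)"

definition schatten :: "real \<Rightarrow> complex mat \<Rightarrow> real" where
  "schatten q A = (Re (mtrace (psd_pow (q / 2) (mat_adjoint A * A)))) powr (1 / q)"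

end

theory Submission
  imports Defs
begin


lemma adj_dims[simp]: "dim_row (mat_adjoint A) = dim_col A" "dim_col (mat_adjoint A) = dim_row A"
  unfolding mat_adjoint_def by auto

lemma adj_index[simp]: "i < dim_col A \<Longrightarrow> j < dim_row A \<Longrightarrow> mat_adjoint A $$ (i,j) = conjugate (A $$ (j,i))"
  unfolding mat_adjoint_def by (auto simp: mat_of_rows_index)

lemma adj_adj[simp]: "mat_adjoint (mat_adjoint (A :: complex mat)) = A"
  by (rule eq_matI) simp_all

lemma adj_mult: fixes A B :: "complex mat"
  assumes "dim_col A = dim_row B"
  shows "mat_adjoint (A * B) = mat_adjoint B * mat_adjoint A"
proof (rule eq_matI)
  fix i j assume ij: "i < dim_row (mat_adjoint B * mat_adjoint A)" "j < dim_col (mat_adjoint B * mat_adjoint A)"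
  show "mat_adjoint (A * B) $$ (i, j) = (mat_adjoint B * mat_adjoint A) $$ (i, j)"
    using ij assms by (simp add: scalar_prod_def sum_conjugate mult.commute)
qed simp_all

lemma adj_carrier_iff[simp]: "(mat_adjoint A \<in> carrier_mat n m) = (A \<in> carrier_mat m n)"
  unfolding carrier_mat_def mem_Collect_eq adj_dims by (rule conj_commute)

lemma adj_carrier: assumes "A \<in> carrier_mat m n" shows "mat_adjoint A \<in> carrier_mat n m"
proof -
  from assms have "dim_row A = m" "dim_col A = n" by auto
  then show ?thesis by (intro carrier_matI) simp_all
qed

lemma adj_one[simp]: "mat_adjoint (1\<^sub>m n :: complex mat) = 1\<^sub>m n"
  by (rule eq_matI) simp_all

lemma adj_zero[simp]: "mat_adjoint (0\<^sub>m n m :: complex mat) = 0\<^sub>m m n"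
  by (rule eq_matI) simp_all

lemma adj_add: fixes A B :: "complex mat"
  assumes "A \<in> carrier_mat m n" "B \<in> carrier_mat m n"
  shows "mat_adjoint (A + B) = mat_adjoint A + mat_adjoint B"
  by (rule eq_matI) (use assms in simp_all)

lemma real_diag_carrier[simp]: "real_diag n r \<in> carrier_mat n n"
  by (simp add: real_diag_def)

lemma real_diag_dims[simp]: "dim_row (real_diag n r) = n" "dim_col (real_diag n r) = n"
  by (simp_all add: real_diag_def)

lemma real_diag_index[simp]: "i < n \<Longrightarrow> j < n \<Longrightarrow> real_diag n r $$ (i,j) = (if i = j then complex_of_real (r i) else 0)"
  by (simp add: real_diag_def)

lemma adj_real_diag[simp]: "mat_adjoint (real_diag n r) = real_diag n r"
  by (rule eq_matI) simp_all

lemma real_diag_mult: "real_diag n r * real_diag n s = real_diag n (\<lambda>i. r i * s i)"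
proof (rule eq_matI)
  fix i j assume ij: "i < dim_row (real_diag n (\<lambda>i. r i * s i))" "j < dim_col (real_diag n (\<lambda>i. r i * s i))"
  have "(\<Sum>k = 0..<n. (if i = k then complex_of_real (r i) else 0) * (if k = j then complex_of_real (s k) else 0))
     = (\<Sum>k\<in>{i}. (if i = k then complex_of_real (r i) else 0) * (if k = j then complex_of_real (s k) else 0))"
    using ij by (intro sum.mono_neutral_right) auto
  then show "(real_diag n r * real_diag n s) $$ (i, j) = real_diag n (\<lambda>i. r i * s i) $$ (i, j)"
    using ij by (simp add: scalar_prod_def)
qed simp_all

lemma mtrace_comm: fixes A B :: "'a::comm_ring mat"
  assumes "A \<in> carrier_mat m n" "B \<in> carrier_mat n m"
  shows "mtrace (A * B) = mtrace (B * A)"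
proof -
  have "mtrace (A * B) = (\<Sum>i<m. \<Sum>k<n. A $$ (i,k) * B $$ (k,i))"
    using assms by (simp add: mtrace_def scalar_prod_def atLeast0LessThan)
  also have "\<dots> = (\<Sum>k<n. \<Sum>i<m. B $$ (k,i) * A $$ (i,k))"
    by (subst sum.swap) (simp add: mult.commute)
  also have "\<dots> = mtrace (B * A)"
    using assms by (simp add: mtrace_def scalar_prod_def atLeast0LessThan)
  finally show ?thesis .
qed


lemma real_diag_one: "real_diag n (\<lambda>_. 1) = 1\<^sub>m n"
  by (rule eq_matI) simp_all

lemma orth_unitary:
  fixes ws :: "complex vec list"
  assumes ws: "set ws \<subseteq> carrier_vec n" "corthogonal ws" "length ws = n"
  shows "\<exists>W. unitary n W \<and> (\<forall>j<n. \<exists>c. col W j = c \<cdot>\<^sub>v ws ! j)"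
proof -
  define W0 where "W0 = mat_of_cols n ws"
  have W0: "W0 \<in> carrier_mat n n" unfolding W0_def using mat_of_cols_carrier(1)[of n ws] ws(3) by simp
  have wsj: "j < n \<Longrightarrow> ws ! j \<in> carrier_vec n" for j using ws by (metis nth_mem subsetD)
  define g where "g j = Re (ws ! j \<bullet>c ws ! j)" for j
  have gg: "ws ! j \<bullet>c ws ! j = complex_of_real (g j) \<and> g j > 0" if j: "j < n" for j
  proof -
    have ne: "ws ! j \<bullet>c ws ! j \<noteq> 0" using corthogonalD[OF ws(2), of j j] j ws(3) by simp
    have ge: "ws ! j \<bullet>c ws ! j \<ge> 0" by (rule conjugate_square_ge_0_vec)
    then have "Im (ws ! j \<bullet>c ws ! j) = 0" "Re (ws ! j \<bullet>c ws ! j) \<ge> 0"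
      by (simp_all add: less_eq_complex_def)
    moreover have "ws ! j \<bullet>c ws ! j = complex_of_real (Re (ws ! j \<bullet>c ws ! j))"
      using \<open>Im (ws ! j \<bullet>c ws ! j) = 0\<close> by (simp add: complex_eq_iff)
    ultimately show ?thesis unfolding g_def using ne
      by (metis less_eq_real_def of_real_0)
  qed
  have G: "mat_adjoint W0 * W0 = real_diag n g"
  proof (rule eq_matI)
    fix i j assume i: "i < dim_row (real_diag n g)" and j: "j < dim_col (real_diag n g)"
    have "(mat_adjoint W0 * W0) $$ (i,j) = (\<Sum>k = 0..<n. cnj (ws ! i $ k) * ws ! j $ k)"
      using i j W0 ws by (simp add: scalar_prod_def W0_def mat_of_cols_index)
    also have "\<dots> = ws ! j \<bullet>c ws ! i"
      using i j wsj[of i] wsj[of j] by (simp add: scalar_prod_def mult.commute)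
    also have "\<dots> = real_diag n g $$ (i,j)"
    proof (cases "i = j")
      case True
      then show ?thesis using i gg[of i] by simp
    next
      case False
      then have "ws ! j \<bullet>c ws ! i = 0" using i j corthogonalD[OF ws(2), of j i] ws(3) by simp
      then show ?thesis using i j False by simp
    qed
    finally show "(mat_adjoint W0 * W0) $$ (i,j) = real_diag n g $$ (i,j)" .
  qed (use W0 in simp_all)
  define S where "S = real_diag n (\<lambda>j. 1 / sqrt (g j))"
  define W where "W = W0 * S"
  have S: "S \<in> carrier_mat n n" unfolding S_def by simp
  have W: "W \<in> carrier_mat n n" unfolding W_def using W0 S by simp
  have "mat_adjoint W * W = S * (mat_adjoint W0 * W0) * S"
  proof -
    have A: "mat_adjoint W0 \<in> carrier_mat n n" using W0 by simp
    have "mat_adjoint W = S * mat_adjoint W0" unfolding W_def using W0 S by (simp add: adj_mult S_def)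
    have AW: "mat_adjoint W0 * W0 \<in> carrier_mat n n" by (rule mult_carrier_mat[OF A W0])
    have WS: "W0 * S \<in> carrier_mat n n" by (rule mult_carrier_mat[OF W0 S])
    have "(S * mat_adjoint W0) * (W0 * S) = S * (mat_adjoint W0 * (W0 * S))"
      by (rule assoc_mult_mat[OF S A WS])
    also have "mat_adjoint W0 * (W0 * S) = (mat_adjoint W0 * W0) * S"
      by (rule assoc_mult_mat[OF A W0 S, symmetric])
    also have "S * ((mat_adjoint W0 * W0) * S) = (S * (mat_adjoint W0 * W0)) * S"
      by (rule assoc_mult_mat[OF S AW S, symmetric])
    finally show ?thesis unfolding W_def using \<open>mat_adjoint W = S * mat_adjoint W0\<close> W_def by simp
  qed
  also have "\<dots> = real_diag n (\<lambda>j. 1 / sqrt (g j) * g j * (1 / sqrt (g j)))"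
    unfolding G S_def real_diag_mult by simp
  also have "\<dots> = 1\<^sub>m n"
  proof -
    have one: "1 / sqrt (g i) * g i * (1 / sqrt (g i)) = 1" if "i < n" for i
    proof -
      have "g i > 0" using gg \<open>i < n\<close> by simp
      have "sqrt (g i) * sqrt (g i) = g i" using \<open>g i > 0\<close> by simp
      moreover have "sqrt (g i) > 0" using \<open>g i > 0\<close> by simp
      ultimately show ?thesis by (simp add: field_simps)
    qed
    have g1: "g i \<noteq> 0" "\<bar>g i\<bar> = g i" if "i < n" for i using gg[OF that] by auto
    show ?thesis by (rule eq_matI) (simp_all add: one g1)
  qed
  finally have WW: "mat_adjoint W * W = 1\<^sub>m n" .
  have WW2: "W * mat_adjoint W = 1\<^sub>m n"
    by (rule mat_mult_left_right_inverse[OF adj_carrier[OF W] W WW])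
  have cols: "\<exists>c. col W j = c \<cdot>\<^sub>v ws ! j" if j: "j < n" for j
  proof (intro exI eq_vecI)
    show "dim_vec (col W j) = dim_vec (complex_of_real (1 / sqrt (g j)) \<cdot>\<^sub>v ws ! j)"
      using W wsj[OF j] by simp
    fix k assume k: "k < dim_vec (complex_of_real (1 / sqrt (g j)) \<cdot>\<^sub>v ws ! j)"
    then have k': "k < n" using wsj[OF j] by simp
    have "col W j $ k = (\<Sum>l = 0..<n. ws ! l $ k * (if l = j then complex_of_real (1 / sqrt (g l)) else 0))"
      using k' j W0 ws by (simp add: W_def S_def scalar_prod_def W0_def mat_of_cols_index)
    also have "\<dots> = (\<Sum>l\<in>{j}. ws ! l $ k * (if l = j then complex_of_real (1 / sqrt (g l)) else 0))"
      using j by (intro sum.mono_neutral_right) simp_all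
    also have "\<dots> = (complex_of_real (1 / sqrt (g j)) \<cdot>\<^sub>v ws ! j) $ k"
      using k by simp
    finally show "col W j $ k = (complex_of_real (1 / sqrt (g j)) \<cdot>\<^sub>v ws ! j) $ k" .
  qed
  show ?thesis using W WW WW2 cols unfolding unitary_def by blast
qed


lemma unitary_mult:
  assumes U: "unitary n U" and V: "unitary n V"
  shows "unitary n (U * V)"
proof -
  have Uc: "U \<in> carrier_mat n n" and Vc: "V \<in> carrier_mat n n"
    using U V unfolding unitary_def by auto
  have Ua: "mat_adjoint U \<in> carrier_mat n n" and Va: "mat_adjoint V \<in> carrier_mat n n"
    using Uc Vc by simp_all
  have adj: "mat_adjoint (U * V) = mat_adjoint V * mat_adjoint U"
    using Uc Vc by (simp add: adj_mult)
  have "(U * V) * mat_adjoint (U * V) = U * (V * mat_adjoint V) * mat_adjoint U"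
    unfolding adj using Uc Vc Ua Va by (simp add: assoc_mult_mat[of _ n n _ n _ n])
  also have "\<dots> = 1\<^sub>m n" using U V Uc unfolding unitary_def by simp
  finally have 1: "(U * V) * mat_adjoint (U * V) = 1\<^sub>m n" .
  have 2: "mat_adjoint (U * V) * (U * V) = 1\<^sub>m n"
    by (rule mat_mult_left_right_inverse[OF _ _ 1]) (use Uc Vc in simp_all)
  show ?thesis unfolding unitary_def using 1 2 Uc Vc by simp
qed

lemma adj_four_block:
  fixes A B C D :: "complex mat"
  assumes "A \<in> carrier_mat n1 m1" "B \<in> carrier_mat n1 m2" "C \<in> carrier_mat n2 m1" "D \<in> carrier_mat n2 m2"
  shows "mat_adjoint (four_block_mat A B C D) = four_block_mat (mat_adjoint A) (mat_adjoint C) (mat_adjoint B) (mat_adjoint D)"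
  by (rule eq_matI) (use assms in simp_all)


lemma exists_unitary_eigen:
  fixes H :: "complex mat"
  assumes H: "H \<in> carrier_mat n n" and n: "n > 0"
  shows "\<exists>W e. unitary n W \<and> H *\<^sub>v col W 0 = e \<cdot>\<^sub>v col W 0"
proof -
  obtain as where cp: "char_poly H = (\<Prod>a\<leftarrow>as. [:- a, 1:])" and len: "length as = n"
    using char_poly_factorized[OF H] by blast
  then obtain e es where as: "as = e # es" using n by (cases as) auto
  have "poly (char_poly H) e = 0" unfolding cp as by simp
  then have ev: "eigenvalue H e" using eigenvalue_root_char_poly[OF H] by simp
  define v where "v = find_eigenvector H e"
  have "eigenvector H v e" unfolding v_def by (rule find_eigenvector[OF H ev])
  then have v: "v \<in> carrier_vec n" and v0: "v \<noteq> 0\<^sub>v n" and Hv: "H *\<^sub>v v = e \<cdot>\<^sub>v v"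
    unfolding eigenvector_def using H by auto
  interpret cof_vec_space n "TYPE(complex)" .
  define b where "b = basis_completion v"
  from basis_completion[OF v v0, folded b_def]
  have dist_b: "distinct b"
    and indep: "\<not> lin_dep (set b)" and b: "set b \<subseteq> carrier_vec n"
    and len_b: "length b = n" and hdb: "hd b = v"
    by auto
  define ws where "ws = gram_schmidt n b"
  from gram_schmidt_result[OF b dist_b indep refl, folded ws_def]
  have ws: "set ws \<subseteq> carrier_vec n" "corthogonal ws" "length ws = n"
    by (auto simp: len_b)
  obtain vs where bv: "b = v # vs" using hdb len_b n by (cases b) auto
  have hdws: "hd ws = v" unfolding ws_def bv using gram_schmidt_hd[OF v] by simp
  have ws0: "ws ! 0 = v" using hdws ws(3) n by (cases ws) auto
  obtain W where W: "unitary n W" and cols: "\<forall>j<n. \<exists>c. col W j = c \<cdot>\<^sub>v ws ! j"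
    using orth_unitary[OF ws] by blast
  obtain c where c: "col W 0 = c \<cdot>\<^sub>v v" using cols n ws0 by auto
  have "H *\<^sub>v col W 0 = e \<cdot>\<^sub>v col W 0"
    unfolding c using H v Hv by (simp add: mult_mat_vec smult_smult_assoc mult.commute)
  then show ?thesis using W by blast
qed


lemma spectral:
  fixes H :: "complex mat"
  assumes "H \<in> carrier_mat n n" "mat_adjoint H = H"
  shows "\<exists>U r. unitary n U \<and> H = U * real_diag n r * mat_adjoint U"
  using assms
proof (induction n arbitrary: H)
  case 0
  have "H = 1\<^sub>m 0 * real_diag 0 (\<lambda>_. 0) * mat_adjoint (1\<^sub>m 0)"
    by (rule eq_matI) (use 0 in simp_all)
  moreover have "unitary 0 (1\<^sub>m 0)" unfolding unitary_def by simp
  ultimately show ?case by blast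
next
  case (Suc m)
  define n where "n = Suc m"
  have H: "H \<in> carrier_mat n n" and herm: "mat_adjoint H = H" using Suc.prems n_def by auto
  obtain W e where W: "unitary n W" and ev: "H *\<^sub>v col W 0 = e \<cdot>\<^sub>v col W 0"
    using exists_unitary_eigen[OF H] n_def by blast
  have Wc: "W \<in> carrier_mat n n" and WW: "W * mat_adjoint W = 1\<^sub>m n" and WW2: "mat_adjoint W * W = 1\<^sub>m n"
    using W unfolding unitary_def by auto
  have Wa: "mat_adjoint W \<in> carrier_mat n n" using Wc by simp
  have w: "col W 0 \<in> carrier_vec n" using Wc n_def by (intro carrier_vecI) simp
  define C where "C = mat_adjoint W * H * W"
  have Cc: "C \<in> carrier_mat n n" unfolding C_def using Wc H by simp
  have Cherm: "mat_adjoint C = C"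
  proof -
    have "mat_adjoint C = mat_adjoint W * mat_adjoint (mat_adjoint W * H)"
      unfolding C_def using Wc H by (simp add: adj_mult)
    also have "\<dots> = mat_adjoint W * (H * W)"
      using Wc H herm by (simp add: adj_mult)
    also have "\<dots> = C" unfolding C_def using Wc Wa H by simp
    finally show ?thesis .
  qed
  have col0: "col C 0 = e \<cdot>\<^sub>v unit_vec n 0"
  proof -
    have "col C 0 = (mat_adjoint W * H) *\<^sub>v col W 0"
      unfolding C_def by (rule col_mult2[of _ n n _ n]) (use Wc H n_def in simp_all)
    also have "\<dots> = mat_adjoint W *\<^sub>v (e \<cdot>\<^sub>v col W 0)"
      by (subst assoc_mult_mat_vec[of _ n n _ n]) (use Wc H ev w in simp_all)
    also have "\<dots> = e \<cdot>\<^sub>v (mat_adjoint W *\<^sub>v col W 0)"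
      using Wc Wa w by (simp add: mult_mat_vec)
    also have "mat_adjoint W *\<^sub>v col W 0 = col (mat_adjoint W * W) 0"
      by (rule col_mult2[symmetric, of _ n n _ n]) (use Wc n_def in simp_all)
    also have "\<dots> = unit_vec n 0" unfolding WW2 using n_def by simp
    finally show ?thesis .
  qed
  have Ci0: "C $$ (i, 0) = (if i = 0 then e else 0)" if "i < n" for i
  proof -
    have "C $$ (i, 0) = col C 0 $ i" using that Cc n_def by simp
    then show ?thesis unfolding col0 using that by simp
  qed
  have C0j: "C $$ (0, j) = (if j = 0 then e else 0)" if "j < n" for j
  proof -
    have "C $$ (0, j) = mat_adjoint C $$ (0, j)" unfolding Cherm ..
    also have "\<dots> = cnj (C $$ (j, 0))" using that Cc n_def by simp
    finally have *: "C $$ (0, j) = cnj (C $$ (j, 0))" .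
    show ?thesis
    proof (cases "j = 0")
      case True
      then show ?thesis using Ci0[of 0] n_def by simp
    next
      case False
      then show ?thesis using * Ci0[OF that] by simp
    qed
  qed
  have ereal: "e = complex_of_real (Re e)"
  proof -
    have "C $$ (0,0) = mat_adjoint C $$ (0,0)" unfolding Cherm ..
    also have "\<dots> = cnj (C $$ (0,0))" using Cc n_def by simp
    finally have "e = cnj e" using Ci0[of 0] n_def by simp
    then have "Im e = Im (cnj e)" by simp
    then have "Im e = - Im e" by simp
    then have "Im e = 0" by simp
    then show ?thesis by (simp add: complex_eq_iff)
  qed
  define D where "D = mat m m (\<lambda>(i,j). C $$ (Suc i, Suc j))"
  have Dc: "D \<in> carrier_mat m m" unfolding D_def by simp
  have Dherm: "mat_adjoint D = D"
  proof (rule eq_matI)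
    fix i j assume "i < dim_row D" "j < dim_col D"
    then have ij: "i < m" "j < m" unfolding D_def by auto
    have "mat_adjoint D $$ (i,j) = cnj (C $$ (Suc j, Suc i))" using ij unfolding D_def by simp
    also have "\<dots> = mat_adjoint C $$ (Suc i, Suc j)" using ij Cc n_def by simp
    also have "\<dots> = D $$ (i,j)" unfolding Cherm D_def using ij by simp
    finally show "mat_adjoint D $$ (i,j) = D $$ (i,j)" .
  qed (simp_all add: D_def)
  obtain V r where V: "unitary m V" and DV: "D = V * real_diag m r * mat_adjoint V"
    using Suc.IH[OF Dc Dherm] by blast
  have Vc: "V \<in> carrier_mat m m" and VV: "V * mat_adjoint V = 1\<^sub>m m" and VV2: "mat_adjoint V * V = 1\<^sub>m m"
    using V unfolding unitary_def by auto
  have Va: "mat_adjoint V \<in> carrier_mat m m" using Vc by simp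
  define E where "E = real_diag 1 (\<lambda>_. Re e)"
  have Ec: "E \<in> carrier_mat 1 1" unfolding E_def by simp
  define X where "X = four_block_mat (1\<^sub>m 1) (0\<^sub>m 1 m) (0\<^sub>m m 1) V"
  have Xc: "X \<in> carrier_mat n n" unfolding X_def n_def
    using four_block_carrier_mat[OF one_carrier_mat[of 1] Vc, of "0\<^sub>m 1 m" "0\<^sub>m m 1"] by simp
  have Xa: "mat_adjoint X = four_block_mat (1\<^sub>m 1) (0\<^sub>m 1 m) (0\<^sub>m m 1) (mat_adjoint V)"
    unfolding X_def by (subst adj_four_block[of _ 1 1 _ m _ m]) (use Vc in simp_all)
  have XX: "X * mat_adjoint X = 1\<^sub>m n"
    unfolding Xa unfolding X_def n_def using Vc Va VV
    by (subst mult_four_block_mat[OF one_carrier_mat zero_carrier_mat zero_carrier_mat Vc one_carrier_mat zero_carrier_mat zero_carrier_mat Va]) (use Vc Va VV in simp)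
  have XX2: "mat_adjoint X * X = 1\<^sub>m n"
    unfolding Xa unfolding X_def n_def using Vc Va VV2
    by (subst mult_four_block_mat[OF one_carrier_mat zero_carrier_mat zero_carrier_mat Va one_carrier_mat zero_carrier_mat zero_carrier_mat Vc]) (use Vc Va VV2 in simp)
  have Xu: "unitary n X" unfolding unitary_def using Xc XX XX2 by simp
  define r' where "r' = (\<lambda>i. if i = 0 then Re e else r (i - 1))"
  have Dg: "real_diag n r' = four_block_mat E (0\<^sub>m 1 m) (0\<^sub>m m 1) (real_diag m r)"
  proof (rule eq_matI)
    fix i j assume "i < dim_row (four_block_mat E (0\<^sub>m 1 m) (0\<^sub>m m 1) (real_diag m r))"
      "j < dim_col (four_block_mat E (0\<^sub>m 1 m) (0\<^sub>m m 1) (real_diag m r))"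
    then have ij: "i < Suc m" "j < Suc m" using Ec by simp_all
    show "real_diag n r' $$ (i,j) = four_block_mat E (0\<^sub>m 1 m) (0\<^sub>m m 1) (real_diag m r) $$ (i,j)"
    proof -
      have sub: "\<And>i j::nat. 0 < i \<Longrightarrow> 0 < j \<Longrightarrow> (i - Suc 0 = j - Suc 0) = (i = j)" by arith
      show ?thesis using ij Ec by (cases "i = 0"; cases "j = 0") (simp_all add: E_def r'_def n_def sub)
    qed
  qed (use Ec in \<open>simp_all add: n_def\<close>)
  have CX: "C = four_block_mat E (0\<^sub>m 1 m) (0\<^sub>m m 1) D"
  proof (rule eq_matI)
    fix i j assume "i < dim_row (four_block_mat E (0\<^sub>m 1 m) (0\<^sub>m m 1) D)"
      "j < dim_col (four_block_mat E (0\<^sub>m 1 m) (0\<^sub>m m 1) D)"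
    then have ij: "i < n" "j < n" using Ec Dc n_def by auto
    show "C $$ (i, j) = four_block_mat E (0\<^sub>m 1 m) (0\<^sub>m m 1) D $$ (i, j)"
    proof (cases "i = 0")
      case True
      then show ?thesis using C0j[OF ij(2)] ij Ec Dc ereal n_def by (simp add: E_def)
    next
      case False
      note i = this
      show ?thesis
      proof (cases "j = 0")
        case True
        then show ?thesis using Ci0[OF ij(1)] ij Ec Dc i n_def by simp
      next
        case False
        then obtain i' j' where "i = Suc i'" "j = Suc j'" using i by (cases i; cases j) auto
        then show ?thesis using ij Ec Dc n_def by (simp add: D_def)
      qed
    qed
  qed (use Ec Dc Cc n_def in simp_all)
  have "X * real_diag n r' * mat_adjoint X = four_block_mat E (0\<^sub>m 1 m) (0\<^sub>m m 1) (V * real_diag m r * mat_adjoint V)"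
  proof -
    have Rc: "real_diag m r \<in> carrier_mat m m" by simp
    have VR: "V * real_diag m r \<in> carrier_mat m m" using Vc Rc by (rule mult_carrier_mat)
    have P1: "four_block_mat (1\<^sub>m 1) (0\<^sub>m 1 m) (0\<^sub>m m 1) V * four_block_mat E (0\<^sub>m 1 m) (0\<^sub>m m 1) (real_diag m r)
      = four_block_mat E (0\<^sub>m 1 m) (0\<^sub>m m 1) (V * real_diag m r)"
      by (subst mult_four_block_mat[OF one_carrier_mat zero_carrier_mat zero_carrier_mat Vc Ec zero_carrier_mat zero_carrier_mat Rc]) (use Vc Ec in simp)
    have P2: "four_block_mat E (0\<^sub>m 1 m) (0\<^sub>m m 1) (V * real_diag m r) * four_block_mat (1\<^sub>m 1) (0\<^sub>m 1 m) (0\<^sub>m m 1) (mat_adjoint V)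
      = four_block_mat E (0\<^sub>m 1 m) (0\<^sub>m m 1) (V * real_diag m r * mat_adjoint V)"
      by (subst mult_four_block_mat[OF Ec zero_carrier_mat zero_carrier_mat VR one_carrier_mat zero_carrier_mat zero_carrier_mat Va]) (use Va Ec VR mult_carrier_mat[OF VR Va] in simp)
    show ?thesis unfolding Dg Xa unfolding X_def P1 P2 by (rule refl)
  qed
  also have "\<dots> = C" unfolding CX DV ..
  finally have CXD: "C = X * real_diag n r' * mat_adjoint X" ..
  have WaH: "mat_adjoint W * H \<in> carrier_mat n n" using Wa H by (rule mult_carrier_mat)
  have "W * C = (W * (mat_adjoint W * H)) * W" unfolding C_def by (rule assoc_mult_mat[OF Wc WaH Wc, symmetric])
  also have "W * (mat_adjoint W * H) = (W * mat_adjoint W) * H" by (rule assoc_mult_mat[OF Wc Wa H, symmetric])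
  also have "\<dots> = H" unfolding WW using H by simp
  finally have WC: "W * C = H * W" .
  have "H = H * (W * mat_adjoint W)" unfolding WW using H by simp
  also have "\<dots> = (H * W) * mat_adjoint W" by (rule assoc_mult_mat[OF H Wc Wa, symmetric])
  also have "\<dots> = W * C * mat_adjoint W" unfolding WC ..
  also have "\<dots> = (W * X) * real_diag n r' * mat_adjoint (W * X)"
  proof -
    have Dgc: "real_diag n r' \<in> carrier_mat n n" by simp
    have Xa': "mat_adjoint X \<in> carrier_mat n n" using Xc by simp
    have XD: "X * real_diag n r' \<in> carrier_mat n n" using Xc Dgc by (rule mult_carrier_mat)
    have WX: "W * X \<in> carrier_mat n n" using Wc Xc by (rule mult_carrier_mat)
    have WXD: "W * X * real_diag n r' \<in> carrier_mat n n" using WX Dgc by (rule mult_carrier_mat)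
    have "W * C = W * (X * real_diag n r' * mat_adjoint X)" unfolding CXD ..
    also have "\<dots> = (W * (X * real_diag n r')) * mat_adjoint X" by (rule assoc_mult_mat[OF Wc XD Xa', symmetric])
    also have "W * (X * real_diag n r') = W * X * real_diag n r'" by (rule assoc_mult_mat[OF Wc Xc Dgc, symmetric])
    finally have "W * C * mat_adjoint W = (W * X * real_diag n r' * mat_adjoint X) * mat_adjoint W" by simp
    also have "\<dots> = W * X * real_diag n r' * (mat_adjoint X * mat_adjoint W)" by (rule assoc_mult_mat[OF WXD Xa' Wa])
    also have "mat_adjoint X * mat_adjoint W = mat_adjoint (W * X)" using Wc Xc by (simp add: adj_mult)
    finally show ?thesis .
  qed
  finally have "H = (W * X) * real_diag n r' * mat_adjoint (W * X)" .
  moreover have "unitary n (W * X)" by (rule unitary_mult[OF W Xu])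
  ultimately show ?case unfolding n_def by blast
qed



lemma proots_linear_prod: "proots (\<Prod>a\<leftarrow>as. [:- a, 1:]) = mset (as :: complex list)"
proof (induction as)
  case (Cons a as)
  have nz: "(\<Prod>a\<leftarrow>as. [:- a, 1:]) \<noteq> (0 :: complex poly)"
  proof -
    have "(0 :: complex poly) \<notin> (\<lambda>a. [:- a, 1:]) ` set as"
    proof
      assume "(0 :: complex poly) \<in> (\<lambda>a. [:- a, 1:]) ` set as"
      then obtain b where "(0 :: complex poly) = [:- b, 1:]" by blast
      then show False by simp
    qed
    then show ?thesis unfolding prod_list_zero_iff set_map by blast
  qed
  have e: "(\<Prod>a\<leftarrow>a # as. [:- a, 1:]) = [:- a, 1:] * (\<Prod>a\<leftarrow>as. [:- a, 1:])" by simp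
  have "proots ([:- a, 1:] * (\<Prod>a\<leftarrow>as. [:- a, 1:])) = proots [:- a, 1:] + proots (\<Prod>a\<leftarrow>as. [:- a, 1:])"
    by (rule proots_mult) (simp, rule nz)
  moreover have "proots [:- a, 1:] = {#a#}" using proots_linear_factor[of "-a"] by simp
  ultimately show ?case unfolding e using Cons by simp
qed simp

lemma unitary_conj:
  assumes U: "unitary k U" and that: "D \<in> carrier_mat k k"
  shows "mat_adjoint U * (U * D * mat_adjoint U) * U = D"
proof -
  have Uc: "U \<in> carrier_mat k k" and UU: "mat_adjoint U * U = 1\<^sub>m k" using U unfolding unitary_def by auto
  have Ua: "mat_adjoint U \<in> carrier_mat k k" using Uc by simp
  have UD: "U * D \<in> carrier_mat k k" using Uc that by (rule mult_carrier_mat)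
  have "mat_adjoint U * (U * D * mat_adjoint U) = (mat_adjoint U * (U * D)) * mat_adjoint U"
    by (rule assoc_mult_mat[OF Ua UD Ua, symmetric])
  also have "mat_adjoint U * (U * D) = (mat_adjoint U * U) * D"
    by (rule assoc_mult_mat[OF Ua Uc that, symmetric])
  also have "\<dots> = D" unfolding UU using that by simp
  finally have "mat_adjoint U * (U * D * mat_adjoint U) * U = D * mat_adjoint U * U" by simp
  also have "\<dots> = D * (mat_adjoint U * U)" by (rule assoc_mult_mat[OF that Ua Uc])
  also have "\<dots> = D" unfolding UU using that by simp
  finally show ?thesis .
qed

lemma triple_carrier: "U \<in> carrier_mat k k \<Longrightarrow> D \<in> carrier_mat k k \<Longrightarrow> U * D * mat_adjoint U \<in> carrier_mat k k"
  using mult_carrier_mat[OF mult_carrier_mat adj_carrier] by blast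

lemma eigvals_decomp:
  assumes U: "unitary k U" and H: "H = U * real_diag k r * mat_adjoint U"
  shows "eigvals H = mset (map (\<lambda>i. complex_of_real (r i)) [0..<k])"
proof -
  have Uc: "U \<in> carrier_mat k k" and UU: "mat_adjoint U * U = 1\<^sub>m k" and UU2: "U * mat_adjoint U = 1\<^sub>m k"
    using U unfolding unitary_def by auto
  have Hc: "H \<in> carrier_mat k k" unfolding H using Uc by (simp add: triple_carrier)
  have "similar_mat H (real_diag k r)"
    by (rule similar_matI[of H "real_diag k r" U "mat_adjoint U" k]) (use Uc Hc UU UU2 H in simp_all)
  then have "char_poly H = char_poly (real_diag k r)" by (rule char_poly_similar)
  also have "\<dots> = (\<Prod>a\<leftarrow>diag_mat (real_diag k r). [:- a, 1:])"
    by (rule char_poly_upper_triangular[of _ k]) (simp_all add: upper_triangular_def)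
  also have "diag_mat (real_diag k r) = map (\<lambda>i. complex_of_real (r i)) [0..<k]"
    by (simp add: diag_mat_def)
  finally have cp: "char_poly H = (\<Prod>a\<leftarrow>map (\<lambda>i. complex_of_real (r i)) [0..<k]. [:- a, 1:])" .
  show ?thesis unfolding eigvals_def cp by (rule proots_linear_prod)
qed

lemma mtrace_decomp:
  assumes U: "unitary k U" and "D \<in> carrier_mat k k"
  shows "mtrace (U * D * mat_adjoint U) = mtrace D"
proof -
  have Uc: "U \<in> carrier_mat k k" and UU: "mat_adjoint U * U = 1\<^sub>m k"
    using U unfolding unitary_def by auto
  have "mtrace ((U * D) * mat_adjoint U) = mtrace (mat_adjoint U * (U * D))"
    by (rule mtrace_comm[of _ k k]) (use Uc assms(2) in simp_all)
  also have "mat_adjoint U * (U * D) = (mat_adjoint U * U) * D"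
    using Uc assms(2) by (intro assoc_mult_mat[symmetric]) simp_all
  also have "\<dots> = D" unfolding UU using assms(2) by simp
  finally show ?thesis .
qed

lemma mtrace_real_diag: "mtrace (real_diag k r) = complex_of_real (\<Sum>i<k. r i)"
  by (simp add: mtrace_def)

lemma psd_pow_char:
  assumes H: "H \<in> carrier_mat k k"
    and ex: "\<exists>U r. unitary k U \<and> (\<forall>i<k. r i \<ge> 0) \<and> H = U * real_diag k r * mat_adjoint U"
  shows "\<exists>U r. unitary k U \<and> (\<forall>i<k. r i \<ge> 0) \<and> H = U * real_diag k r * mat_adjoint U \<and>
     psd_pow s H = U * real_diag k (\<lambda>i. r i powr s) * mat_adjoint U"
proof -
  let ?P = "\<lambda>R. \<exists>n U r. H \<in> carrier_mat n n \<and> unitary n U \<and> (\<forall>i<n. r i \<ge> 0) \<and>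
       H = U * real_diag n r * mat_adjoint U \<and>
       R = U * real_diag n (\<lambda>i. r i powr s) * mat_adjoint U"
  obtain U r where Ur: "unitary k U" "\<forall>i<k. r i \<ge> 0" "H = U * real_diag k r * mat_adjoint U"
    using ex by blast
  have "?P (U * real_diag k (\<lambda>i. r i powr s) * mat_adjoint U)" using H Ur by blast
  then have "?P (psd_pow s H)" unfolding psd_pow_def by (rule someI)
  then obtain n U' r' where "H \<in> carrier_mat n n" "unitary n U'" "\<forall>i<n. r' i \<ge> 0"
    "H = U' * real_diag n r' * mat_adjoint U'" "psd_pow s H = U' * real_diag n (\<lambda>i. r' i powr s) * mat_adjoint U'"
    by blast
  moreover have "n = k" using H \<open>H \<in> carrier_mat n n\<close> by auto
  ultimately show ?thesis by blast
qed



abbreviation gsum :: "nat \<Rightarrow> (nat \<Rightarrow> complex mat) \<Rightarrow> nat list \<Rightarrow> complex mat" where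
  "gsum k Y xs \<equiv> foldr (\<lambda>j acc. mat_adjoint (Y j) * Y j + acc) xs (0\<^sub>m k k)"

lemma gsum_carrier: "(\<forall>j\<in>set xs. Y j \<in> carrier_mat q k) \<Longrightarrow> gsum k Y xs \<in> carrier_mat k k"
proof (induction xs)
  case (Cons a xs)
  then have "Y a \<in> carrier_mat q k" by simp
  then have "mat_adjoint (Y a) * Y a \<in> carrier_mat k k" by (intro mult_carrier_mat[of _ k q]) simp_all
  then show ?case using Cons by simp
qed simp

lemma gsum_herm: "(\<forall>j\<in>set xs. Y j \<in> carrier_mat q k) \<Longrightarrow> mat_adjoint (gsum k Y xs) = gsum k Y xs"
proof (induction xs)
  case (Cons a xs)
  then have Ya: "Y a \<in> carrier_mat q k" by simp
  then have G: "mat_adjoint (Y a) * Y a \<in> carrier_mat k k" by (intro mult_carrier_mat[of _ k q]) simp_all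
  have S: "gsum k Y xs \<in> carrier_mat k k" using Cons.prems by (intro gsum_carrier[of _ _ q]) simp
  have "mat_adjoint (gsum k Y (a # xs)) = mat_adjoint (mat_adjoint (Y a) * Y a) + mat_adjoint (gsum k Y xs)"
    using G S by (simp add: adj_add)
  also have "mat_adjoint (mat_adjoint (Y a) * Y a) = mat_adjoint (Y a) * Y a"
    using Ya by (simp add: adj_mult)
  finally show ?case using Cons by simp
qed simp

lemma gram_diag_nonneg:
  fixes Y :: "complex mat"
  assumes "i < dim_col Y"
  shows "Re ((mat_adjoint Y * Y) $$ (i,i)) \<ge> 0"
proof -
  have "(mat_adjoint Y * Y) $$ (i,i) = (\<Sum>c = 0..<dim_row Y. cnj (Y $$ (c,i)) * Y $$ (c,i))"
    using assms by (simp add: scalar_prod_def)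
  then have "Re ((mat_adjoint Y * Y) $$ (i,i)) = (\<Sum>c = 0..<dim_row Y. (Re (Y $$ (c,i)))\<^sup>2 + (Im (Y $$ (c,i)))\<^sup>2)"
    by (simp add: Re_sum power2_eq_square)
  also have "\<dots> \<ge> 0" by (intro sum_nonneg) simp
  finally show ?thesis .
qed

lemma gsum_psd:
  assumes "\<forall>j\<in>set xs. Y j \<in> carrier_mat q k" "U \<in> carrier_mat k k" "i < k"
  shows "Re ((mat_adjoint U * gsum k Y xs * U) $$ (i,i)) \<ge> 0"
  using assms(1)
proof (induction xs)
  case Nil
  then show ?case using assms by simp
next
  case (Cons a xs)
  have Uc: "U \<in> carrier_mat k k" by fact
  have Ua: "mat_adjoint U \<in> carrier_mat k k" using Uc by simp
  have Ya: "Y a \<in> carrier_mat q k" using Cons.prems by simp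
  have G: "mat_adjoint (Y a) * Y a \<in> carrier_mat k k" using Ya by (intro mult_carrier_mat[of _ k q]) simp_all
  have S: "gsum k Y xs \<in> carrier_mat k k" using Cons.prems by (intro gsum_carrier[of _ _ q]) simp
  have "mat_adjoint U * gsum k Y (a # xs) * U =
     mat_adjoint U * (mat_adjoint (Y a) * Y a) * U + mat_adjoint U * gsum k Y xs * U"
  proof -
    have "mat_adjoint U * gsum k Y (a # xs) = mat_adjoint U * (mat_adjoint (Y a) * Y a) + mat_adjoint U * gsum k Y xs"
      using Ua G S by (simp add: mult_add_distrib_mat[OF Ua G S])
    then show ?thesis using Ua G S Uc
      by (simp add: add_mult_distrib_mat[of _ k k _ _ k])
  qed
  also have "mat_adjoint U * (mat_adjoint (Y a) * Y a) * U = mat_adjoint (Y a * U) * (Y a * U)"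
  proof -
    have "mat_adjoint (Y a * U) = mat_adjoint U * mat_adjoint (Y a)" using Ya Uc by (simp add: adj_mult)
    moreover have Yad: "mat_adjoint (Y a) \<in> carrier_mat k q" using Ya by simp
    ultimately show ?thesis using Ua Yad Ya Uc
      by (simp add: assoc_mult_mat[of _ k k _ q _ k] assoc_mult_mat[of _ k q _ k _ k] assoc_mult_mat[of _ k k _ k _ k])
  qed
  finally have eq: "mat_adjoint U * gsum k Y (a # xs) * U = mat_adjoint (Y a * U) * (Y a * U) + mat_adjoint U * gsum k Y xs * U" .
  have "Re ((mat_adjoint (Y a * U) * (Y a * U)) $$ (i,i)) \<ge> 0"
    by (rule gram_diag_nonneg) (use Ya Uc assms(3) in simp)
  moreover have "Re ((mat_adjoint U * gsum k Y xs * U) $$ (i,i)) \<ge> 0" using Cons by simp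
  moreover have "(mat_adjoint (Y a * U) * (Y a * U) + mat_adjoint U * gsum k Y xs * U) $$ (i,i)
     = (mat_adjoint (Y a * U) * (Y a * U)) $$ (i,i) + (mat_adjoint U * gsum k Y xs * U) $$ (i,i)"
    using Ya Uc S assms(3) by simp
  ultimately show ?case unfolding eq by simp
qed

lemma mtrace_add:
  assumes "A \<in> carrier_mat k k" "B \<in> carrier_mat k k"
  shows "mtrace (A + B) = mtrace A + mtrace (B :: complex mat)"
proof -
  have d: "dim_row A = k" "dim_row B = k" "dim_row (A+B) = k" using assms by auto
  have "mtrace (A+B) = (\<Sum>i<k. A $$ (i,i) + B $$ (i,i))"
    unfolding mtrace_def d(3) using assms by (intro sum.cong) auto
  then show ?thesis unfolding mtrace_def d(1) d(2) by (simp add: sum.distrib)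
qed

lemma gsum_trace: "(\<forall>j\<in>set xs. Y j \<in> carrier_mat q k) \<Longrightarrow> mtrace (gsum k Y xs) = (\<Sum>j\<leftarrow>xs. mtrace (mat_adjoint (Y j) * Y j))"
proof (induction xs)
  case Nil
  then show ?case by (simp add: mtrace_def)
next
  case (Cons a xs)
  then have Ya: "Y a \<in> carrier_mat q k" by simp
  then have G: "mat_adjoint (Y a) * Y a \<in> carrier_mat k k" by (intro mult_carrier_mat[of _ k q]) simp_all
  have S: "gsum k Y xs \<in> carrier_mat k k" using Cons.prems by (intro gsum_carrier[of _ _ q]) simp
  have "mtrace (mat_adjoint (Y a) * Y a + gsum k Y xs) = mtrace (mat_adjoint (Y a) * Y a) + mtrace (gsum k Y xs)"
    using G S by (rule mtrace_add)
  then show ?case using Cons by simp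
qed


lemma gsum_decomp:
  assumes Y: "\<forall>j\<in>set xs. Y j \<in> carrier_mat q k"
  shows "\<exists>U r. unitary k U \<and> (\<forall>i<k. r i \<ge> 0) \<and> gsum k Y xs = U * real_diag k r * mat_adjoint U"
proof -
  have Hc: "gsum k Y xs \<in> carrier_mat k k" using Y by (rule gsum_carrier)
  obtain U r where U: "unitary k U" and H: "gsum k Y xs = U * real_diag k r * mat_adjoint U"
    using spectral[OF Hc gsum_herm[OF Y]] by blast
  have Uc: "U \<in> carrier_mat k k" using U unfolding unitary_def by simp
  have "r i \<ge> 0" if i: "i < k" for i
  proof -
    have "mat_adjoint U * gsum k Y xs * U = real_diag k r"
      unfolding H by (rule unitary_conj[OF U]) simp
    then have "Re ((mat_adjoint U * gsum k Y xs * U) $$ (i,i)) = r i" using i by simp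
    moreover have "Re ((mat_adjoint U * gsum k Y xs * U) $$ (i,i)) \<ge> 0"
      by (rule gsum_psd[OF Y Uc i])
    ultimately show ?thesis by simp
  qed
  then show ?thesis using U H by blast
qed

lemma sqrt_sq_powr: assumes "(x::real) \<ge> 0" shows "x powr (1/2) * x powr (1/2) = x"
proof (cases "x = 0")
  case True
  then show ?thesis by simp
next
  case False
  have "x powr (1/2) * x powr (1/2) = x powr (1/2 + 1/2)" by (simp add: powr_add[symmetric])
  also have "\<dots> = x" using assms by simp
  finally show ?thesis .
qed

lemma powr_nat_pow: "(x::real) \<ge> 0 \<Longrightarrow> p \<ge> 1 \<Longrightarrow> x powr real p = x ^ p"
  by (cases "x = 0") (simp_all add: powr_realpow)

lemma schatten_psd:
  assumes H: "H \<in> carrier_mat k k"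
    and ex: "\<exists>U r. unitary k U \<and> (\<forall>i<k. r i \<ge> 0) \<and> H = U * real_diag k r * mat_adjoint U"
    and p: "p \<ge> 1"
  shows "schatten (2 * real p) (psd_pow (1/2) H) ^ (2 * p) = (\<Sum>l\<in>#eigvals H. Re l ^ p)"
proof -
  obtain U r where U: "unitary k U" and r: "\<forall>i<k. r i \<ge> 0" and HU: "H = U * real_diag k r * mat_adjoint U"
    and R: "psd_pow (1/2) H = U * real_diag k (\<lambda>i. r i powr (1/2)) * mat_adjoint U"
    using psd_pow_char[OF H ex, of "1/2"] by blast
  have Uc: "U \<in> carrier_mat k k" and UU: "mat_adjoint U * U = 1\<^sub>m k" using U unfolding unitary_def by auto
  have Ua: "mat_adjoint U \<in> carrier_mat k k" using Uc by simp
  define Q where "Q = real_diag k (\<lambda>i. r i powr (1/2))"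
  have Qc: "Q \<in> carrier_mat k k" unfolding Q_def by simp
  have UQ: "U * Q \<in> carrier_mat k k" using Uc Qc by (rule mult_carrier_mat)
  have adjR: "mat_adjoint (psd_pow (1/2) H) = U * Q * mat_adjoint U"
  proof -
    have "mat_adjoint (psd_pow (1/2) H) = mat_adjoint (mat_adjoint U) * mat_adjoint (U * Q)"
      unfolding R Q_def[symmetric] using Uc Qc by (simp add: adj_mult)
    also have "\<dots> = U * (Q * mat_adjoint U)" using Uc Qc by (simp add: adj_mult Q_def)
    also have "\<dots> = U * Q * mat_adjoint U" by (rule assoc_mult_mat[OF Uc Qc Ua, symmetric])
    finally show ?thesis .
  qed
  have "mat_adjoint (psd_pow (1/2) H) * psd_pow (1/2) H = (U * Q * mat_adjoint U) * (U * Q * mat_adjoint U)"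
    unfolding adjR unfolding R Q_def ..
  also have "\<dots> = U * Q * (mat_adjoint U * (U * Q * mat_adjoint U))"
    by (rule assoc_mult_mat[OF UQ Ua triple_carrier[OF Uc Qc]])
  also have "mat_adjoint U * (U * Q * mat_adjoint U) = (mat_adjoint U * (U * Q)) * mat_adjoint U"
    by (rule assoc_mult_mat[OF Ua UQ Ua, symmetric])
  also have "mat_adjoint U * (U * Q) = (mat_adjoint U * U) * Q"
    by (rule assoc_mult_mat[OF Ua Uc Qc, symmetric])
  also have "(mat_adjoint U * U) * Q = Q" unfolding UU using Qc by simp
  also have "U * Q * (Q * mat_adjoint U) = U * (Q * (Q * mat_adjoint U))"
    by (rule assoc_mult_mat[OF Uc Qc mult_carrier_mat[OF Qc Ua]])
  also have "Q * (Q * mat_adjoint U) = (Q * Q) * mat_adjoint U"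
    by (rule assoc_mult_mat[OF Qc Qc Ua, symmetric])
  also have "Q * Q = real_diag k r"
  proof -
    have "Q * Q = real_diag k (\<lambda>i. r i powr (1/2) * r i powr (1/2))" unfolding Q_def real_diag_mult ..
    also have "\<dots> = real_diag k r"
      by (rule eq_matI) (use r sqrt_sq_powr in simp_all)
    finally show ?thesis .
  qed
  also have "U * (real_diag k r * mat_adjoint U) = H"
    unfolding HU by (rule assoc_mult_mat[OF Uc _ Ua, symmetric]) simp
  finally have RR: "mat_adjoint (psd_pow (1/2) H) * psd_pow (1/2) H = H" .
  obtain U' r' where U': "unitary k U'" and r': "\<forall>i<k. r' i \<ge> 0" and HU': "H = U' * real_diag k r' * mat_adjoint U'"
    and P: "psd_pow (real p) H = U' * real_diag k (\<lambda>i. r' i powr real p) * mat_adjoint U'"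
    using psd_pow_char[OF H ex, of "real p"] by blast
  have tr: "Re (mtrace (psd_pow (real p) H)) = (\<Sum>i<k. r' i ^ p)"
  proof -
    have "mtrace (psd_pow (real p) H) = mtrace (real_diag k (\<lambda>i. r' i powr real p))"
      unfolding P by (rule mtrace_decomp[OF U']) simp
    also have "\<dots> = complex_of_real (\<Sum>i<k. r' i powr real p)" by (rule mtrace_real_diag)
    also have "(\<Sum>i<k. r' i powr real p) = (\<Sum>i<k. r' i ^ p)"
      using r' p by (intro sum.cong) (simp_all add: powr_nat_pow)
    finally show ?thesis by simp
  qed
  have ev: "(\<Sum>l\<in>#eigvals H. Re l ^ p) = (\<Sum>i<k. r' i ^ p)"
    unfolding eigvals_decomp[OF U' HU'] by (simp add: sum_unfold_sum_mset image_mset.compositionality o_def atLeast0LessThan)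
  have T0: "(\<Sum>i<k. r' i ^ p) \<ge> 0" using r' by (intro sum_nonneg) simp
  have "schatten (2 * real p) (psd_pow (1/2) H) = (\<Sum>i<k. r' i ^ p) powr (1 / (2 * real p))"
    unfolding schatten_def RR using tr by simp
  moreover have "((\<Sum>i<k. r' i ^ p) powr (1 / (2 * real p))) ^ (2 * p) = (\<Sum>i<k. r' i ^ p)"
  proof (cases "(\<Sum>i<k. r' i ^ p) = 0")
    case True
    then show ?thesis using p by simp
  next
    case False
    then have pos: "(\<Sum>i<k. r' i ^ p) > 0" using T0 by simp
    have "((\<Sum>i<k. r' i ^ p) powr (1 / (2 * real p))) ^ (2 * p)
        = ((\<Sum>i<k. r' i ^ p) powr (1 / (2 * real p))) powr (real (2 * p))"
      by (subst powr_realpow) (use pos in simp_all)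
    also have "\<dots> = (\<Sum>i<k. r' i ^ p) powr (1 / (2 * real p) * real (2 * p))" by (simp add: powr_powr)
    also have "1 / (2 * real p) * real (2 * p) = 1" using p by simp
    finally show ?thesis using pos by simp
  qed
  ultimately show ?thesis using ev by simp
qed



lemma tangent_pow:
  fixes b c :: real and p :: nat
  assumes b: "b \<ge> 0" and c: "c > 0"
  shows "c ^ p + real p * c ^ (p - 1) * (b - c) \<le> b ^ p"
proof (cases p)
  case 0 then show ?thesis by simp
next
  case (Suc q)
  have "1 + real p * (b / c - 1) \<le> (1 + (b / c - 1)) ^ p"
    by (rule Bernoulli_inequality) (use b c in simp)
  then have "1 + real p * (b / c - 1) \<le> (b / c) ^ p" by simp
  then have "c ^ p * (1 + real p * (b / c - 1)) \<le> c ^ p * (b / c) ^ p"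
    using c by (intro mult_left_mono) simp_all
  also have "c ^ p * (b / c) ^ p = b ^ p" using c by (simp add: power_divide)
  also have "c ^ p * (1 + real p * (b / c - 1)) = c ^ p + real p * c ^ (p - 1) * (b - c)"
    using c Suc by (simp add: field_simps)
  finally show ?thesis .
qed

lemma power_ineq:
  fixes a b :: "nat \<Rightarrow> real" and K d p :: nat
  assumes a0: "\<forall>i<K. a i \<ge> 0" and b0: "\<forall>i<d. b i \<ge> 0"
    and sums: "(\<Sum>i<K. a i) = (\<Sum>i<d. b i)"
    and amax: "\<forall>i<K. a i \<le> (\<Sum>i<d. b i) / real d" and p: "p \<ge> 1"
  shows "(\<Sum>i<K. a i ^ p) \<le> (\<Sum>i<d. b i ^ p)"
proof -
  define S where "S = (\<Sum>i<d. b i)"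
  define c where "c = S / real d"
  have S0: "S \<ge> 0" unfolding S_def using b0 by (intro sum_nonneg) simp
  have R0: "(\<Sum>i<d. b i ^ p) \<ge> 0" using b0 by (intro sum_nonneg) simp
  show ?thesis
  proof (cases "c > 0")
    case False
    have "c \<ge> 0" unfolding c_def using S0 by simp
    with False have "c = 0" by linarith
    then have "\<forall>i<K. a i = 0" using a0 amax unfolding c_def S_def by (metis order_antisym)
    then have "(\<Sum>i<K. a i ^ p) = 0" using p by simp
    then show ?thesis using R0 by simp
  next
    case True
    then have d: "d > 0" unfolding c_def by (cases d) auto
    have dc: "real d * c = S" unfolding c_def using d by simp
    have "(\<Sum>i<K. a i ^ p) \<le> (\<Sum>i<K. a i * c ^ (p - 1))"
    proof (intro sum_mono)
      fix i assume "i \<in> {..<K}"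
      then have ai: "a i \<ge> 0" "a i \<le> c" using a0 amax unfolding c_def S_def by auto
      have "a i ^ p = a i * a i ^ (p - 1)" using p by (cases p) simp_all
      also have "\<dots> \<le> a i * c ^ (p - 1)" using ai by (intro mult_left_mono power_mono) simp_all
      finally show "a i ^ p \<le> a i * c ^ (p - 1)" .
    qed
    also have "\<dots> = (\<Sum>i<K. a i) * c ^ (p - 1)" by (simp add: sum_distrib_right)
    also have "\<dots> = S * c ^ (p - 1)" unfolding S_def using sums by simp
    also have "\<dots> = (\<Sum>i<d. c ^ p + real p * c ^ (p - 1) * (b i - c))"
    proof -
      have "(\<Sum>i<d. c ^ p + real p * c ^ (p - 1) * (b i - c)) = real d * c ^ p + real p * c ^ (p - 1) * (S - real d * c)"
      proof -
        have "(\<Sum>i<d. real p * c ^ (p - 1) * (b i - c)) = real p * c ^ (p - 1) * (\<Sum>i<d. b i - c)"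
          by (simp add: sum_distrib_left)
        also have "(\<Sum>i<d. b i - c) = S - real d * c" unfolding S_def by (simp add: sum_subtractf)
        finally show ?thesis by (simp add: sum.distrib)
      qed
      also have "\<dots> = real d * c ^ p" using dc by simp
      also have "\<dots> = S * c ^ (p - 1)" using dc p by (cases p) (simp_all add: mult.assoc[symmetric])
      finally show ?thesis by simp
    qed
    also have "\<dots> \<le> (\<Sum>i<d. b i ^ p)"
      using b0 True by (intro sum_mono tangent_pow) simp_all
    finally show ?thesis .
  qed
qed



lemma eig_sum_conv:
  "(\<Sum>l\<in>#mset (map (\<lambda>i. complex_of_real (r i)) [0..<k]). f l) = (\<Sum>i<k. f (complex_of_real (r i)))"
  by (simp add: sum_unfold_sum_mset image_mset.compositionality o_def atLeast0LessThan)

lemma eig_sum_conv2: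
  "sum_mset (mset (map (\<lambda>i. complex_of_real (r i)) [0..<k])) = complex_of_real (\<Sum>i<k. r i)"
  using eig_sum_conv[where f="\<lambda>l. l" and r=r and k=k] by simp

lemma eig_mem_conv:
  "l \<in># mset (map (\<lambda>i. complex_of_real (r i)) [0..<k]) \<longleftrightarrow> (\<exists>i<k. l = complex_of_real (r i))"
  by auto

theorem lemma5p10:
  fixes n d N :: nat and M :: "nat \<Rightarrow> complex mat"
  assumes M: "\<forall>j<N. M j \<in> carrier_mat d (n * d)"
  defines "A \<equiv> mat_sum (n * d) (\<lambda>j. mat_adjoint (M j) * M j) N"
      and "B \<equiv> mat_sum d (\<lambda>j. M j * mat_adjoint (M j)) N"
  shows "sum_mset (eigvals A) = sum_mset (eigvals B) \<and>
         ((\<forall>l\<in>#eigvals A. Re l \<le> Re (sum_mset (eigvals B)) / real d) \<longrightarrow>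
           (\<forall>p::nat. p \<ge> 2 \<longrightarrow>
              schatten (2 * real p) (psd_pow (1/2) B) ^ (2 * p)
                \<ge> schatten (2 * real p) (psd_pow (1/2) A) ^ (2 * p)))"
proof -
  define k where "k = n * d"
  have Mc: "\<forall>j\<in>set [0..<N]. M j \<in> carrier_mat d k" using M unfolding k_def by simp
  have Mac: "\<forall>j\<in>set [0..<N]. mat_adjoint (M j) \<in> carrier_mat k d" using Mc by simp
  have Aeq: "A = gsum k M [0..<N]" unfolding A_def mat_sum_def k_def by simp
  have Beq: "B = gsum d (\<lambda>j. mat_adjoint (M j)) [0..<N]" unfolding B_def mat_sum_def by simp
  have Ac: "A \<in> carrier_mat k k" unfolding Aeq by (rule gsum_carrier[OF Mc])
  have Bc: "B \<in> carrier_mat d d" unfolding Beq by (rule gsum_carrier[OF Mac])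
  have exA: "\<exists>U r. unitary k U \<and> (\<forall>i<k. r i \<ge> 0) \<and> A = U * real_diag k r * mat_adjoint U"
    unfolding Aeq by (rule gsum_decomp[OF Mc])
  have exB: "\<exists>U r. unitary d U \<and> (\<forall>i<d. r i \<ge> 0) \<and> B = U * real_diag d r * mat_adjoint U"
    unfolding Beq by (rule gsum_decomp[OF Mac])
  obtain UA rA where UA: "unitary k UA" and rA: "\<forall>i<k. rA i \<ge> 0" and AU: "A = UA * real_diag k rA * mat_adjoint UA"
    using exA by blast
  obtain UB rB where UB: "unitary d UB" and rB: "\<forall>i<d. rB i \<ge> 0" and BU: "B = UB * real_diag d rB * mat_adjoint UB"
    using exB by blast
  have eA: "eigvals A = mset (map (\<lambda>i. complex_of_real (rA i)) [0..<k])" by (rule eigvals_decomp[OF UA AU])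
  have eB: "eigvals B = mset (map (\<lambda>i. complex_of_real (rB i)) [0..<d])" by (rule eigvals_decomp[OF UB BU])
  have trA: "mtrace A = complex_of_real (\<Sum>i<k. rA i)"
    unfolding AU by (subst mtrace_decomp[OF UA]) (simp_all add: mtrace_real_diag)
  have trB: "mtrace B = complex_of_real (\<Sum>i<d. rB i)"
    unfolding BU by (subst mtrace_decomp[OF UB]) (simp_all add: mtrace_real_diag)
  have trAB: "mtrace A = mtrace B"
  proof -
    have "mtrace A = (\<Sum>j\<leftarrow>[0..<N]. mtrace (mat_adjoint (M j) * M j))"
      unfolding Aeq by (rule gsum_trace[OF Mc])
    also have "\<dots> = (\<Sum>j\<leftarrow>[0..<N]. mtrace (mat_adjoint (mat_adjoint (M j)) * mat_adjoint (M j)))"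
    proof (intro arg_cong[where f = sum_list] map_cong refl)
      fix j assume "j \<in> set [0..<N]"
      then have Mj: "M j \<in> carrier_mat d k" using Mc by blast
      have "mtrace (mat_adjoint (M j) * M j) = mtrace (M j * mat_adjoint (M j))"
        by (rule mtrace_comm[of _ k d]) (use Mj in simp_all)
      then show "mtrace (mat_adjoint (M j) * M j) = mtrace (mat_adjoint (mat_adjoint (M j)) * mat_adjoint (M j))"
        by simp
    qed
    also have "\<dots> = mtrace B"
      unfolding Beq by (rule gsum_trace[OF Mac, symmetric])
    finally show ?thesis .
  qed
  have sA: "sum_mset (eigvals A) = mtrace A" unfolding eA trA by (rule eig_sum_conv2)
  have sB: "sum_mset (eigvals B) = mtrace B" unfolding eB trB by (rule eig_sum_conv2)
  have part1: "sum_mset (eigvals A) = sum_mset (eigvals B)" using sA sB trAB by simp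
  have "complex_of_real (\<Sum>i<k. rA i) = complex_of_real (\<Sum>i<d. rB i)" using trA trB trAB by metis
  then have sumeq: "(\<Sum>i<k. rA i) = (\<Sum>i<d. rB i)" by (rule of_real_eq_iff[THEN iffD1])
  have ReB: "Re (sum_mset (eigvals B)) = (\<Sum>i<d. rB i)" using sB trB by simp
  have part2: "schatten (2 * real p) (psd_pow (1/2) B) ^ (2 * p)
                \<ge> schatten (2 * real p) (psd_pow (1/2) A) ^ (2 * p)"
    if hyp: "\<forall>l\<in>#eigvals A. Re l \<le> Re (sum_mset (eigvals B)) / real d" and p: "p \<ge> 2" for p
  proof -
    have p1: "p \<ge> 1" using p by simp
    have LA: "schatten (2 * real p) (psd_pow (1/2) A) ^ (2 * p) = (\<Sum>i<k. rA i ^ p)"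
      unfolding schatten_psd[OF Ac exA p1] eA eig_sum_conv by simp
    have LB: "schatten (2 * real p) (psd_pow (1/2) B) ^ (2 * p) = (\<Sum>i<d. rB i ^ p)"
      unfolding schatten_psd[OF Bc exB p1] eB eig_sum_conv by simp
    have amax: "\<forall>i<k. rA i \<le> (\<Sum>i<d. rB i) / real d"
    proof (intro allI impI)
      fix i assume "i < k"
      then have "complex_of_real (rA i) \<in># eigvals A" unfolding eA eig_mem_conv by blast
      then have "Re (complex_of_real (rA i)) \<le> Re (sum_mset (eigvals B)) / real d" using hyp by blast
      then show "rA i \<le> (\<Sum>i<d. rB i) / real d" unfolding ReB by simp
    qed
    show ?thesis unfolding LA LB by (rule power_ineq[OF rA rB sumeq amax p1])
  qed
  show ?thesis using part1 part2 by blast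
qed

end
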